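(* Let $\mathcal E$ be a semilattice with zero, $\mathbf K$ a field, $A$ an associative $\mathbf K$-algebra, and $\pi:\mathcal E\to A$ a map with $\pi(0)=0$ and $\pi(xy)=\pi(x)\pi(y)$ for all $x,y$, such that $A$ is generated as an algebra by $\pi(\mathcal E)$. Then (i) the spectrum $\hat A$ of $A$ is homeomorphic to the space $\hat{\mathcal E}_\pi$ of $\pi$-tight characters of $\mathcal E$; (ii) $A$ is isomorphic to the algebra $C_c(\hat{\mathcal E}_\pi,\mathbf K)$ of all locally constant, compactly supported $\mathbf K$-valued functions on $\hat{\mathcal E}_\pi$.
   Context: Under the hypotheses $A$ is commutative, and $\mathcal B_A=\{e\in A:e^2=e\}$ is a Boolean algebra (possibly without top) under $e\wedge f=ef$, $e\vee f=e+f-ef$, into which $\pi$ maps. A character of $\mathcal E$ is a nonzero map $\varphi:\mathcal E\to\{0,1\}$ with $\varphi(0)=0$ and $\varphi(xy)=\varphi(x)\varphi(y)$; the spectrum $\hat{\mathcal E}$ is the set of characters with the topology of pointwise convergence (induced from $\{0,1\}^{\mathcal E}$). A character $\varphi$ is $\pi$-tight if for all $n\ge1$ and $x,y_1,\dots,y_n\in\mathcal E$, $\pi(x)\le\bigvee_i\pi(y_i)$ in $\mathcal B_A$ implies $\varphi(x)\le\bigvee_i\varphi(y_i)$; $\hat{\mathcal E}_\pi\subseteq\hat{\mathcal E}$ is the (closed) subspace of $\pi$-tight characters. The spectrum $\hat A$ is the set of nonzero $\mathbf K$-algebra homomorphisms $A\to\mathbf K$ with the topology of pointwise convergence, $\mathbf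 K$ being discrete. *)

theory Defs
  imports "HOL-Analysis.Analysis"
begin

definition K_algebra :: "('k::field \<Rightarrow> 'a::ring \<Rightarrow> 'a) \<Rightarrow> bool" where
  "K_algebra sc \<longleftrightarrow> module sc \<and>
     (\<forall>c x y. sc c (x * y) = sc c x * y \<and> sc c (x * y) = x * sc c y)"

inductive_set alg_gen :: "('k::field \<Rightarrow> 'a::ring \<Rightarrow> 'a) \<Rightarrow> 'a set \<Rightarrow> 'a set"
  for sc S where
  base: "s \<in> S \<Longrightarrow> s \<in> alg_gen sc S"
| zero: "0 \<in> alg_gen sc S"
| add: "x \<in> alg_gen sc S \<Longrightarrow> y \<in> alg_gen sc S \<Longrightarrow> x + y \<in> alg_gen sc S"
| smult: "x \<in> alg_gen sc S \<Longrightarrow> sc c x \<in> alg_gen sc S"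
| mult: "x \<in> alg_gen sc S \<Longrightarrow> y \<in> alg_gen sc S \<Longrightarrow> x * y \<in> alg_gen sc S"

text \<open>Characters of a semilattice with zero (values in {0,1} rendered as bool).\<close>
definition sl_character :: "('e::{semilattice_inf,order_bot} \<Rightarrow> bool) \<Rightarrow> bool" where
  "sl_character \<phi> \<longleftrightarrow> \<phi> \<noteq> (\<lambda>_. False) \<and> \<not> \<phi> bot \<and>
     (\<forall>x y. \<phi> (inf x y) = (\<phi> x \<and> \<phi> y))"

text \<open>Join and order of the Boolean algebra of idempotents B_A.\<close>
fun idem_join :: "'a::ring list \<Rightarrow> 'a" where
  "idem_join [] = 0"
| "idem_join (e # es) = e + idem_join es - e * idem_join es"

definition idem_le :: "'a::ring \<Rightarrow> 'a \<Rightarrow> bool" where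
  "idem_le e f \<longleftrightarrow> e * f = e"

definition pi_tight :: "('e::{semilattice_inf,order_bot} \<Rightarrow> 'a::ring) \<Rightarrow> ('e \<Rightarrow> bool) \<Rightarrow> bool" where
  "pi_tight \<pi> \<phi> \<longleftrightarrow> (\<forall>x ys. ys \<noteq> [] \<longrightarrow> idem_le (\<pi> x) (idem_join (map \<pi> ys)) \<longrightarrow>
       \<phi> x \<longrightarrow> (\<exists>y\<in>set ys. \<phi> y))"

definition pointwise_top :: "('x \<Rightarrow> 'y) topology" where
  "pointwise_top = product_topology (\<lambda>_. discrete_topology UNIV) UNIV"

definition tight_spectrum :: "('e::{semilattice_inf,order_bot} \<Rightarrow> 'a::ring) \<Rightarrow> ('e \<Rightarrow> bool) topology" where
  "tight_spectrum \<pi> = subtopology pointwise_top {\<phi>. sl_character \<phi> \<and> pi_tight \<pi> \<phi>}"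

definition alg_hom_K :: "('k::field \<Rightarrow> 'a::ring \<Rightarrow> 'a) \<Rightarrow> ('a \<Rightarrow> 'k) \<Rightarrow> bool" where
  "alg_hom_K sc h \<longleftrightarrow> (\<forall>x y. h (x + y) = h x + h y) \<and> (\<forall>x y. h (x * y) = h x * h y) \<and>
     (\<forall>c x. h (sc c x) = c * h x)"

definition alg_spectrum :: "('k::field \<Rightarrow> 'a::ring \<Rightarrow> 'a) \<Rightarrow> ('a \<Rightarrow> 'k) topology" where
  "alg_spectrum sc = subtopology pointwise_top {h. alg_hom_K sc h \<and> h \<noteq> (\<lambda>_. 0)}"

definition locally_constant :: "'x topology \<Rightarrow> ('x \<Rightarrow> 'k) \<Rightarrow> bool" where
  "locally_constant X f \<longleftrightarrow>
     (\<forall>x\<in>topspace X. \<exists>U. openin X U \<and> x \<in> U \<and> (\<forall>y\<in>U. f y = f x))"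

text \<open>C_c(X,K): locally constant, compactly supported functions on X,
  represented as functions vanishing outside topspace X.\<close>
definition Cc :: "'x topology \<Rightarrow> ('x \<Rightarrow> 'k::field) set" where
  "Cc X = {f. (\<forall>x. x \<notin> topspace X \<longrightarrow> f x = 0) \<and> locally_constant X f \<and>
              compactin X (X closure_of {x \<in> topspace X. f x \<noteq> 0})}"

end

theory Submission
  imports Defs
begin


definition cyl :: "('x \<Rightarrow> 'y) \<Rightarrow> 'x set \<Rightarrow> ('x \<Rightarrow> 'y) set" where
  "cyl \<phi> S = {\<psi>. \<forall>x\<in>S. \<psi> x = \<phi> x}"

lemma topspace_pointwise [simp]: "topspace pointwise_top = UNIV"
  by (simp add: pointwise_top_def)

lemma openin_cyl:
  assumes "finite S" shows "openin pointwise_top (cyl \<phi> S)"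
proof -
  have e: "cyl \<phi> S = PiE UNIV (\<lambda>i. if i \<in> S then {\<phi> i} else UNIV)"
    by (auto simp: cyl_def PiE_def Pi_def split: if_splits)
  have "{i. (if i \<in> S then {\<phi> i} else UNIV) \<noteq> UNIV} \<subseteq> S" by auto
  hence "finite {i \<in> UNIV. (if i \<in> S then {\<phi> i} else UNIV) \<noteq> topspace (discrete_topology UNIV)}"
    using assms by (auto intro: finite_subset)
  thus ?thesis unfolding e pointwise_top_def by (subst openin_PiE_gen) auto
qed

lemma cyl_self [simp]: "\<phi> \<in> cyl \<phi> S" by (simp add: cyl_def)

lemma open_has_cyl:
  assumes "openin pointwise_top V" "\<phi> \<in> V"
  shows "\<exists>S. finite S \<and> cyl \<phi> S \<subseteq> V"
proof -
  obtain U where U: "finite {i \<in> UNIV. U i \<noteq> topspace (discrete_topology UNIV)}"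
     "\<phi> \<in> PiE UNIV U" "PiE UNIV U \<subseteq> V"
    using assms unfolding pointwise_top_def openin_product_topology_alt by blast
  let ?S = "{i. U i \<noteq> UNIV}"
  have "\<psi> \<in> PiE UNIV U" if "\<psi> \<in> cyl \<phi> ?S" for \<psi>
  proof -
    have "\<psi> i \<in> U i" for i
    proof (cases "U i = UNIV")
      case False
      hence "\<psi> i = \<phi> i" using that by (simp add: cyl_def)
      moreover have "\<phi> i \<in> U i" using U(2) by (simp add: PiE_UNIV_domain Pi_iff)
      ultimately show ?thesis by simp
    qed simp
    thus ?thesis by (simp add: PiE_UNIV_domain Pi_iff)
  qed
  hence "cyl \<phi> ?S \<subseteq> PiE UNIV U" by blast
  thus ?thesis using U by (intro exI[of _ ?S]) auto
qed

lemma continuous_dep: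
  assumes "finite S" and dep: "\<And>\<phi> \<psi>. \<phi> \<in> T \<Longrightarrow> \<psi> \<in> T \<Longrightarrow> (\<forall>x\<in>S. \<phi> x = \<psi> x) \<Longrightarrow> f \<phi> = f \<psi>"
    and im: "f ` T \<subseteq> topspace Y"
  shows "continuous_map (subtopology pointwise_top T) Y f"
  unfolding continuous_map_def
proof (intro conjI allI impI)
  show "f \<in> topspace (subtopology pointwise_top T) \<rightarrow> topspace Y" using im by auto
  fix U assume "openin Y U"
  show "openin (subtopology pointwise_top T) {x \<in> topspace (subtopology pointwise_top T). f x \<in> U}"
  proof (subst openin_subopen, intro ballI)
    fix \<phi> assume \<phi>: "\<phi> \<in> {x \<in> topspace (subtopology pointwise_top T). f x \<in> U}"
    show "\<exists>W. openin (subtopology pointwise_top T) W \<and> \<phi> \<in> W \<and> W \<subseteq> {x \<in> topspace (subtopology pointwise_top T). f x \<in> U}"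
    proof (intro exI conjI)
      show "openin (subtopology pointwise_top T) (T \<inter> cyl \<phi> S)"
        by (rule openin_subtopology_Int2, rule openin_cyl[OF assms(1)])
      show "\<phi> \<in> T \<inter> cyl \<phi> S" using \<phi> by simp
      show "T \<inter> cyl \<phi> S \<subseteq> {x \<in> topspace (subtopology pointwise_top T). f x \<in> U}"
      proof
        fix \<psi> assume \<psi>: "\<psi> \<in> T \<inter> cyl \<phi> S"
        have \<phi>T: "\<phi> \<in> T" "f \<phi> \<in> U" using \<phi> by auto
        have "f \<psi> = f \<phi>" by (rule dep) (use \<psi> \<phi>T in \<open>auto simp: cyl_def\<close>)
        thus "\<psi> \<in> {x \<in> topspace (subtopology pointwise_top T). f x \<in> U}" using \<psi> \<phi>T by simp
      qed
    qed
  qed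
qed

lemma closed_dep:
  assumes "\<And>i. finite (S i)" and dep: "\<And>i \<phi> \<psi>. (\<forall>x\<in>S i. \<phi> x = \<psi> x) \<Longrightarrow> P i \<phi> = P i \<psi>"
  shows "closedin pointwise_top {\<phi>. \<forall>i. P i \<phi>}"
  unfolding closedin_def
proof (intro conjI)
  show "openin pointwise_top (topspace pointwise_top - {\<phi>. \<forall>i. P i \<phi>})"
  proof (subst openin_subopen, intro ballI)
    fix \<phi> assume "\<phi> \<in> topspace pointwise_top - {\<phi>. \<forall>i. P i \<phi>}"
    then obtain i where i: "\<not> P i \<phi>" by auto
    show "\<exists>W. openin pointwise_top W \<and> \<phi> \<in> W \<and> W \<subseteq> topspace pointwise_top - {\<phi>. \<forall>i. P i \<phi>}"
    proof (intro exI conjI)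
      show "openin pointwise_top (cyl \<phi> (S i))" by (rule openin_cyl[OF assms(1)])
      show "cyl \<phi> (S i) \<subseteq> topspace pointwise_top - {\<phi>. \<forall>i. P i \<phi>}"
      proof
        fix \<psi> assume "\<psi> \<in> cyl \<phi> (S i)"
        hence "P i \<psi> = P i \<phi>" by (intro dep) (simp add: cyl_def)
        thus "\<psi> \<in> topspace pointwise_top - {\<phi>. \<forall>i. P i \<phi>}" using i by auto
      qed
    qed simp
  qed
qed simp

lemma compact_pointwise_bool: "compact_space (pointwise_top :: ('x \<Rightarrow> bool) topology)"
  unfolding pointwise_top_def
  by (subst compact_space_product_topology) (simp add: compact_space_discrete_topology)




locale S15 =
  fixes sc :: "'k::field \<Rightarrow> 'a::ring \<Rightarrow> 'a" and \<pi> :: "'e::{semilattice_inf,order_bot} \<Rightarrow> 'a"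
  assumes alg: "K_algebra sc" and pbot: "\<pi> bot = 0" and pinf: "\<And>x y. \<pi> (inf x y) = \<pi> x * \<pi> y"
    and gen: "alg_gen sc (range \<pi>) = UNIV"

sublocale S15 \<subseteq> M: module sc using alg by (simp add: K_algebra_def)

context S15 begin

lemma scm1: "sc c (x * y) = sc c x * y"
  using alg by (auto simp: K_algebra_def)
lemma scm2: "sc c (x * y) = x * sc c y"
  using alg unfolding K_algebra_def by blast

lemma sc_mult: "sc c u * sc d v = sc (c * d) (u * v)"
  by (metis M.scale_scale scm1 scm2)

definition lin :: "('k \<times> 'e) list \<Rightarrow> 'a" where
  "lin L = sum_list (map (\<lambda>(c,x). sc c (\<pi> x)) L)"

lemma lin_Nil [simp]: "lin [] = 0" and lin_Cons [simp]: "lin ((c,x)#L) = sc c (\<pi> x) + lin L"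
  and lin_append [simp]: "lin (L1 @ L2) = lin L1 + lin L2"
  by (simp_all add: lin_def)

lemma lin_scale: "lin (map (\<lambda>(d,y). (c*d, y)) L) = sc c (lin L)"
  by (induction L) (auto simp: M.scale_right_distrib)

definition lmul :: "('k \<times> 'e) list \<Rightarrow> ('k \<times> 'e) list \<Rightarrow> ('k \<times> 'e) list" where
  "lmul L1 L2 = concat (map (\<lambda>(c,x). map (\<lambda>(d,y). (c*d, inf x y)) L2) L1)"

lemma lin_mult: "lin L1 * lin L2 = lin (lmul L1 L2)"
proof (induction L1)
  case Nil thus ?case by (simp add: lmul_def)
next
  case (Cons p L1)
  obtain c x where p: "p = (c,x)" by force
  have "sc c (\<pi> x) * lin L2 = lin (map (\<lambda>(d,y). (c*d, inf x y)) L2)"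
    by (induction L2) (auto simp: distrib_left sc_mult pinf)
  thus ?case using Cons by (simp add: p lmul_def distrib_right)
qed

lemma gen_lin: "\<exists>L. a = lin L"
proof -
  have "a \<in> alg_gen sc (range \<pi>)" using gen by simp
  thus ?thesis
  proof (induction rule: alg_gen.induct)
    case (base s) then obtain x where "s = \<pi> x" by auto
    thus ?case by (intro exI[of _ "[(1,x)]"]) simp
  next
    case zero show ?case by (intro exI[of _ "[]"]) simp
  next
    case (add x y) thus ?case by (metis lin_append)
  next
    case (smult x c) thus ?case by (metis lin_scale)
  next
    case (mult x y) thus ?case by (metis lin_mult)
  qed
qed

lemma pi_comm: "\<pi> x * \<pi> y = \<pi> y * \<pi> x"
  by (metis inf_commute pinf)

lemma pi_idem: "\<pi> x * \<pi> x = \<pi> x"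
  by (metis inf_idem pinf)

lemma comm: "a * b = b * (a::'a)"
proof -
  obtain L1 L2 where a: "a = lin L1" and b: "b = lin L2" using gen_lin by metis
  have 1: "sc c (\<pi> x) * lin L = lin L * sc c (\<pi> x)" for c x L
    by (induction L) (auto simp: distrib_left distrib_right sc_mult pi_comm mult.commute)
  have "lin L1 * lin L2 = lin L2 * lin L1"
    by (induction L1) (auto simp: distrib_left distrib_right 1)
  thus ?thesis using a b by simp
qed

lemma lcomm: "a * (b * c) = b * (a * (c::'a))"
  by (metis comm mult.assoc)

lemmas AC = mult.assoc comm lcomm

lemma pi_le: "a \<le> b \<Longrightarrow> \<pi> a * \<pi> b = \<pi> a"
  by (metis inf.absorb1 pinf)

definition J :: "'e list \<Rightarrow> 'a" where "J ws = idem_join (map \<pi> ws)"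

lemma J_Nil [simp]: "J [] = 0" and J_Cons: "J (w#ws) = \<pi> w + J ws - \<pi> w * J ws"
  by (simp_all add: J_def)

lemma J_mem: "x \<in> set vs \<Longrightarrow> \<pi> x * J vs = \<pi> x"
proof (induction vs)
  case Nil thus ?case by simp
next
  case (Cons v vs)
  show ?case
  proof (cases "x = v")
    case True thus ?thesis by (simp add: J_Cons algebra_simps pi_idem flip: mult.assoc)
  next
    case False
    hence "\<pi> x * J vs = \<pi> x" using Cons by simp
    moreover have "\<pi> x * J (v#vs) = \<pi> x * \<pi> v + \<pi> x * J vs - \<pi> v * (\<pi> x * J vs)"
      by (simp add: J_Cons algebra_simps AC)
    ultimately show ?thesis by (simp add: pi_comm)
  qed
qed

lemma J_sub: "set us \<subseteq> set vs \<Longrightarrow> J us * J vs = J us"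
proof (induction us)
  case Nil thus ?case by simp
next
  case (Cons u us)
  hence IH: "J us * J vs = J us" and m: "\<pi> u * J vs = \<pi> u" using J_mem by auto
  have "J (u#us) * J vs = \<pi> u * J vs + J us * J vs - \<pi> u * (J us * J vs)"
    by (simp add: J_Cons algebra_simps mult.assoc)
  thus ?case by (simp add: IH m J_Cons)
qed

definition C :: "'e \<Rightarrow> 'e list \<Rightarrow> 'a" where "C z ws = \<pi> z - \<pi> z * J ws"

lemma C_mono:
  assumes "a \<le> b" "set vs' \<subseteq> set vs"
  shows "C a vs = C a vs * C b vs'"
proof -
  have ab: "\<pi> a * \<pi> b = \<pi> a" using pi_le[OF assms(1)] .
  have jj: "J vs' * J vs = J vs'" using J_sub[OF assms(2)] .
  have "C a vs * C b vs' = \<pi> a * \<pi> b - \<pi> a * \<pi> b * J vs' - \<pi> a * \<pi> b * J vs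
         + \<pi> a * \<pi> b * (J vs' * J vs)"
    by (simp add: C_def algebra_simps AC)
  also have "\<dots> = C a vs" by (simp add: ab jj C_def)
  finally show ?thesis by simp
qed

lemma C_mono0: "a \<le> b \<Longrightarrow> set vs' \<subseteq> set vs \<Longrightarrow> C b vs' = 0 \<Longrightarrow> C a vs = 0"
  by (metis C_mono mult_zero_right)

lemma C_self: "x \<in> set vs \<Longrightarrow> C x vs = 0"
  by (simp add: C_def J_mem)

lemma C_split: "C a vs = C (inf a x) vs + C a (x#vs)"
  by (simp add: C_def J_Cons pinf algebra_simps AC)

lemma pi_C: "\<pi> x * C z ws = C (inf z x) ws"
  by (simp add: C_def pinf algebra_simps AC)

lemma C_Nil: "C z [] = \<pi> z" by (simp add: C_def)

end



lemma le_foldr: "(a::'e::semilattice_inf) \<le> foldr inf ts z \<longleftrightarrow> (\<forall>t\<in>set ts. a \<le> t) \<and> a \<le> z"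
  by (induction ts) auto

lemma char_foldr: "sl_character \<phi> \<Longrightarrow> \<phi> (foldr inf ts z) = ((\<forall>t\<in>set ts. \<phi> t) \<and> \<phi> z)"
  by (induction ts) (auto simp: sl_character_def)

lemma foldr_le: "t \<in> set ts \<Longrightarrow> foldr inf ts (z::'e::semilattice_inf) \<le> t"
  by (induction ts) (auto intro: le_infI2)

context S15 begin

definition TS :: "('e \<Rightarrow> bool) set" where "TS = {\<phi>. sl_character \<phi> \<and> pi_tight \<pi> \<phi>}"

definition val :: "('e \<Rightarrow> bool) \<Rightarrow> ('k \<times> 'e) list \<Rightarrow> 'k" where
  "val \<phi> L = sum_list (map (\<lambda>(c,x). if \<phi> x then c else 0) L)"

lemma val_Nil [simp]: "val \<phi> [] = 0" and val_Cons [simp]: "val \<phi> ((c,x)#L) = (if \<phi> x then c else 0) + val \<phi> L"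
  and val_append [simp]: "val \<phi> (L1 @ L2) = val \<phi> L1 + val \<phi> L2"
  by (simp_all add: val_def)

lemma sc_zero_cancel: "sc v e = 0 \<Longrightarrow> e \<noteq> 0 \<Longrightarrow> v = 0"
  by (metis M.scale_one M.scale_scale M.scale_zero_right field_class.field_inverse)

lemma WD:
  assumes \<phi>: "\<phi> \<in> TS" and L: "lin L = 0"
  shows "val \<phi> L = 0"
proof -
  have ch: "sl_character \<phi>" and ti: "pi_tight \<pi> \<phi>" using \<phi> by (auto simp: TS_def)
  obtain z0 where z0: "\<phi> z0" using ch unfolding sl_character_def by fastforce
  define P where "P = map snd (filter (\<lambda>(c,x). \<phi> x) L)"
  define N where "N = map snd (filter (\<lambda>(c,x). \<not> \<phi> x) L)"
  define z where "z = foldr inf P z0"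
  define e where "e = C z N"
  have Nf: "\<forall>y\<in>set N. \<not> \<phi> y" by (auto simp: N_def)
  have pe1: "\<pi> x * e = e" if "z \<le> x" for x
  proof -
    have "\<pi> x * e = \<pi> x * \<pi> z - \<pi> x * \<pi> z * J N" by (simp add: e_def C_def algebra_simps)
    also have "\<pi> x * \<pi> z = \<pi> z" using pi_le[OF that] by (simp add: comm)
    finally show ?thesis by (simp add: e_def C_def)
  qed
  have pe0: "\<pi> x * e = 0" if "x \<in> set N" for x
  proof -
    have "\<pi> x * e = \<pi> x * \<pi> z - \<pi> z * (\<pi> x * J N)" by (simp add: e_def C_def algebra_simps AC)
    thus ?thesis using J_mem[OF that] by (simp add: comm)
  qed
  have key: "lin L' * e = sc (val \<phi> L') e"
    if "\<forall>(c,x)\<in>set L'. (\<phi> x \<longrightarrow> z \<le> x) \<and> (\<not> \<phi> x \<longrightarrow> x \<in> set N)" for L'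
    using that
  proof (induction L')
    case Nil thus ?case by simp
  next
    case (Cons p L')
    obtain c x where p: "p = (c,x)" by force
    have "sc c (\<pi> x) * e = sc (if \<phi> x then c else 0) e"
      using Cons.prems pe1 pe0 by (auto simp: p scm1[symmetric])
    thus ?case using Cons by (simp add: p distrib_right M.scale_left_distrib)
  qed
  have "\<forall>(c,x)\<in>set L. (\<phi> x \<longrightarrow> z \<le> x) \<and> (\<not> \<phi> x \<longrightarrow> x \<in> set N)"
  proof (intro ballI, clarify, intro conjI impI)
    fix c x assume cx: "(c,x) \<in> set L"
    { assume "\<phi> x" hence "x \<in> set P" using cx by (force simp: P_def image_iff)
      thus "z \<le> x" by (simp add: z_def foldr_le) }
    { assume "\<not> \<phi> x" thus "x \<in> set N" using cx by (force simp: N_def image_iff) }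
  qed
  hence sc0: "sc (val \<phi> L) e = 0" using key[of L] L by simp
  have enz: "e \<noteq> 0"
  proof
    assume e0: "e = 0"
    have pz: "\<phi> z" using char_foldr[OF ch] z0 by (auto simp: z_def P_def)
    show False
    proof (cases "N = []")
      case True
      hence "\<pi> z = 0" using e0 by (simp add: e_def C_def)
      hence "idem_le (\<pi> z) (idem_join (map \<pi> [bot]))" by (simp add: idem_le_def)
      hence "\<exists>y\<in>set [bot]. \<phi> y" using ti pz unfolding pi_tight_def by blast
      hence "\<phi> bot" by simp
      thus False using ch by (simp add: sl_character_def)
    next
      case False
      have "\<pi> z * J N = \<pi> z" using e0 by (simp add: e_def C_def)
      hence "idem_le (\<pi> z) (idem_join (map \<pi> N))" by (simp add: idem_le_def J_def)
      then obtain y where "y \<in> set N" "\<phi> y" using ti pz False unfolding pi_tight_def by blast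
      thus False using Nf by auto
    qed
  qed
  show ?thesis by (rule sc_zero_cancel[OF sc0 enz])
qed

end



context S15 begin

lemma sc_neg1: "sc (-1) u = - u"
  by (metis M.scale_one M.scale_left_distrib add.right_inverse add_eq_0_iff M.scale_zero_left)

definition negL :: "('k \<times> 'e) list \<Rightarrow> ('k \<times> 'e) list" where
  "negL L = map (\<lambda>(c,x). (-c, x)) L"

lemma lin_negL: "lin (negL L) = - lin L"
proof -
  have "negL L = map (\<lambda>(d,y). ((-1)*d, y)) L" by (simp add: negL_def)
  thus ?thesis using lin_scale[of "-1" L] by (simp add: sc_neg1)
qed

lemma val_negL: "val \<phi> (negL L) = - val \<phi> L"
  by (induction L) (auto simp: negL_def)

lemma val_unique: "\<phi> \<in> TS \<Longrightarrow> lin L1 = lin L2 \<Longrightarrow> val \<phi> L1 = val \<phi> L2"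
  using WD[of \<phi> "L1 @ negL L2"] by (simp add: lin_negL val_negL)

definition hh :: "('e \<Rightarrow> bool) \<Rightarrow> 'a \<Rightarrow> 'k" where
  "hh \<phi> a = (SOME v. \<exists>L. a = lin L \<and> v = val \<phi> L)"

lemma hh_lin: "\<phi> \<in> TS \<Longrightarrow> hh \<phi> (lin L) = val \<phi> L"
  unfolding hh_def by (rule someI2[of _ "val \<phi> L"]) (auto intro: val_unique[symmetric])

lemma val_lmul: "sl_character \<phi> \<Longrightarrow> val \<phi> (lmul L1 L2) = val \<phi> L1 * val \<phi> L2"
proof (induction L1)
  case Nil thus ?case by (simp add: lmul_def)
next
  case (Cons p L1)
  obtain c x where p: "p = (c,x)" by force
  have "val \<phi> (map (\<lambda>(d,y). (c*d, inf x y)) L2) = (if \<phi> x then c else 0) * val \<phi> L2"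
    using Cons.prems by (induction L2) (auto simp: sl_character_def algebra_simps)
  thus ?case using Cons by (simp add: p lmul_def algebra_simps)
qed

lemma val_scale: "val \<phi> (map (\<lambda>(d,y). (c*d, y)) L) = c * val \<phi> L"
  by (induction L) (auto simp: algebra_simps)

lemma TS_char: "\<phi> \<in> TS \<Longrightarrow> sl_character \<phi>" by (simp add: TS_def)

lemma hh_add: "\<phi> \<in> TS \<Longrightarrow> hh \<phi> (a + b) = hh \<phi> a + hh \<phi> b"
  by (metis gen_lin hh_lin lin_append val_append)

lemma hh_mult: "\<phi> \<in> TS \<Longrightarrow> hh \<phi> (a * b) = hh \<phi> a * hh \<phi> b"
  by (metis gen_lin hh_lin lin_mult val_lmul TS_char)

lemma hh_sc: "\<phi> \<in> TS \<Longrightarrow> hh \<phi> (sc c a) = c * hh \<phi> a"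
  by (metis gen_lin hh_lin lin_scale val_scale)

lemma hh_pi: "\<phi> \<in> TS \<Longrightarrow> hh \<phi> (\<pi> x) = (if \<phi> x then 1 else 0)"
  using hh_lin[of \<phi> "[(1,x)]"] by simp

lemma hh_zero: "\<phi> \<in> TS \<Longrightarrow> hh \<phi> 0 = 0"
  using hh_lin[of \<phi> "[]"] by simp

lemma hh_diff: "\<phi> \<in> TS \<Longrightarrow> hh \<phi> (a - b) = hh \<phi> a - hh \<phi> b"
  by (metis add_diff_cancel diff_add_cancel hh_add)

lemma hh_J: "\<phi> \<in> TS \<Longrightarrow> hh \<phi> (J ws) = (if \<exists>w\<in>set ws. \<phi> w then 1 else 0)"
  by (induction ws) (auto simp: J_Cons hh_diff hh_add hh_mult hh_pi hh_zero)

lemma hh_C: "\<phi> \<in> TS \<Longrightarrow> hh \<phi> (C z ws) = (if \<phi> z \<and> (\<forall>w\<in>set ws. \<not> \<phi> w) then 1 else 0)"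
  by (auto simp: C_def hh_diff hh_mult hh_pi hh_J)

lemma hh_alg: "\<phi> \<in> TS \<Longrightarrow> alg_hom_K sc (hh \<phi>)"
  by (simp add: alg_hom_K_def hh_add hh_mult hh_sc)

lemma hh_nonzero: "\<phi> \<in> TS \<Longrightarrow> hh \<phi> \<noteq> (\<lambda>_. 0)"
proof
  assume \<phi>: "\<phi> \<in> TS" and h: "hh \<phi> = (\<lambda>_. 0)"
  obtain z where "\<phi> z" using TS_char[OF \<phi>] unfolding sl_character_def by fastforce
  hence "hh \<phi> (\<pi> z) = 1" using hh_pi[OF \<phi>] by simp
  thus False using h by simp
qed

end



lemma foldr_le_z: "foldr inf ts (z::'e::semilattice_inf) \<le> z"
  by (induction ts) (auto intro: le_infI2)

context S15 begin

lemma exists_char: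
  assumes nz: "C z ws \<noteq> 0"
  shows "\<exists>\<phi>\<in>TS. \<phi> z \<and> (\<forall>w\<in>set ws. \<not> \<phi> w)"
proof -
  define Tt :: "('e \<times> bool) set \<Rightarrow> 'e set" where "Tt M = {x. (x,True) \<in> M}" for M
  define Nn :: "('e \<times> bool) set \<Rightarrow> 'e set" where "Nn M = {x. (x,False) \<in> M}" for M
  define cons where "cons M \<longleftrightarrow> (\<forall>ts vs. set ts \<subseteq> Tt M \<longrightarrow> set vs \<subseteq> Nn M \<longrightarrow>
       C (foldr inf ts z) (vs @ ws) \<noteq> 0)" for M
  define A where "A = {M. cons M}"
  have "\<forall>Ch\<in>chains A. \<Union>Ch \<in> A"
  proof
    fix Ch assume Ch: "Ch \<in> chains A"
    show "\<Union>Ch \<in> A" unfolding A_def mem_Collect_eq cons_def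
    proof (intro allI impI)
      fix ts vs assume ts: "set ts \<subseteq> Tt (\<Union>Ch)" and vs: "set vs \<subseteq> Nn (\<Union>Ch)"
      define F where "F = (\<lambda>t. (t,True)) ` set ts \<union> (\<lambda>v. (v,False)) ` set vs"
      have fin: "finite F" by (simp add: F_def)
      have sub: "F \<subseteq> \<Union>Ch" using ts vs by (auto simp: F_def Tt_def Nn_def)
      show "C (foldr inf ts z) (vs @ ws) \<noteq> 0"
      proof (cases "Ch = {}")
        case True
        hence "ts = []" "vs = []" using ts vs by (auto simp: Tt_def Nn_def)
        thus ?thesis using nz by simp
      next
        case False
        obtain B where B: "B \<in> Ch" "F \<subseteq> B"
          using finite_subset_Union_chain[OF fin sub False] Ch by (auto simp: chains_alt_def)
        have "cons B" using B(1) Ch chainsD2 unfolding A_def by blast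
        moreover have "set ts \<subseteq> Tt B" "set vs \<subseteq> Nn B" using B(2) by (auto simp: F_def Tt_def Nn_def)
        ultimately show ?thesis unfolding cons_def by blast
      qed
    qed
  qed
  then obtain M where MA: "M \<in> A" and max: "\<forall>X\<in>A. M \<subseteq> X \<longrightarrow> X = M"
    using Zorn_Lemma by blast
  have consM: "cons M" using MA by (simp add: A_def)
  have ins: "p \<in> M" if "cons (insert p M)" for p
    using max that unfolding A_def by blast
  have bad: False if "set ts \<subseteq> Tt M" "set vs \<subseteq> Nn M" "foldr inf ts z \<le> b"
     "set vs' \<subseteq> set (vs @ ws)" "C b vs' = 0" for ts vs b vs'
    using consM that C_mono0 unfolding cons_def by blast
  have tot: "(x,True) \<in> M \<or> (x,False) \<in> M" for x
  proof (rule ccontr)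
    assume neither: "\<not> ((x,True) \<in> M \<or> (x,False) \<in> M)"
    hence n1: "\<not> cons (insert (x,True) M)" and n2: "\<not> cons (insert (x,False) M)" using ins by blast+
    have eqs: "Tt (insert (x,True) M) = insert x (Tt M)" "Nn (insert (x,True) M) = Nn M"
      "Tt (insert (x,False) M) = Tt M" "Nn (insert (x,False) M) = insert x (Nn M)"
      by (auto simp: Tt_def Nn_def)
    obtain ts1 vs1 where
      1: "set ts1 \<subseteq> insert x (Tt M)" "set vs1 \<subseteq> Nn M" "C (foldr inf ts1 z) (vs1 @ ws) = 0"
      using n1 unfolding cons_def eqs by blast
    obtain ts2 vs2 where
      2: "set ts2 \<subseteq> Tt M" "set vs2 \<subseteq> insert x (Nn M)" "C (foldr inf ts2 z) (vs2 @ ws) = 0"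
      using n2 unfolding cons_def eqs by blast
    define ts where "ts = filter (\<lambda>t. t \<noteq> x) ts1 @ ts2"
    define vs where "vs = vs1 @ filter (\<lambda>v. v \<noteq> x) vs2"
    define a where "a = foldr inf ts z"
    have tsM: "set ts \<subseteq> Tt M" "set vs \<subseteq> Nn M" using 1 2 by (auto simp: ts_def vs_def)
    have "C (inf a x) (vs @ ws) = 0"
    proof (rule C_mono0[OF _ _ 1(3)])
      show "inf a x \<le> foldr inf ts1 z"
        unfolding le_foldr
      proof (intro conjI ballI)
        fix t assume "t \<in> set ts1"
        show "inf a x \<le> t"
        proof (cases "t = x")
          case False hence "t \<in> set ts" using \<open>t \<in> set ts1\<close> by (simp add: ts_def)
          thus ?thesis by (simp add: a_def foldr_le le_infI1)
        qed simp
      next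
        show "inf a x \<le> z" by (simp add: a_def foldr_le_z le_infI1)
      qed
      show "set (vs1 @ ws) \<subseteq> set (vs @ ws)" by (auto simp: vs_def)
    qed
    moreover have "C a (x # vs @ ws) = 0"
    proof (rule C_mono0[OF _ _ 2(3)])
      have "set ts2 \<subseteq> set ts" by (simp add: ts_def)
      hence "\<forall>t\<in>set ts2. a \<le> t" using foldr_le[of _ ts z] by (auto simp: a_def)
      moreover have "a \<le> z" using foldr_le_z[of ts z] by (simp add: a_def)
      ultimately show "a \<le> foldr inf ts2 z" unfolding le_foldr by blast
      show "set (vs2 @ ws) \<subseteq> set (x # vs @ ws)" by (auto simp: vs_def)
    qed
    ultimately have "C a (vs @ ws) = 0" using C_split[of a "vs @ ws" x] by simp
    thus False using consM tsM unfolding cons_def a_def by blast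
  qed
  define \<phi> where "\<phi> x = ((x,True) \<in> M)" for x
  have Nn_iff: "x \<in> Nn M \<longleftrightarrow> \<not> \<phi> x" for x
  proof
    assume "x \<in> Nn M"
    show "\<not> \<phi> x"
    proof
      assume "\<phi> x"
      show False by (rule bad[of "[x]" "[x]" x "[x]"])
        (use \<open>x \<in> Nn M\<close> \<open>\<phi> x\<close> in \<open>auto simp: Tt_def \<phi>_def C_self\<close>)
    qed
  next
    assume "\<not> \<phi> x" thus "x \<in> Nn M" using tot[of x] by (auto simp: Nn_def \<phi>_def)
  qed
  have Tt_iff: "x \<in> Tt M \<longleftrightarrow> \<phi> x" for x by (simp add: Tt_def \<phi>_def)
  have pz: "\<phi> z"
  proof (rule ccontr)
    assume "\<not> \<phi> z"
    show False by (rule bad[of "[]" "[z]" z "[z]"]) (use \<open>\<not> \<phi> z\<close> Nn_iff in \<open>auto simp: C_self\<close>)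
  qed
  have pw: "\<not> \<phi> w" if "w \<in> set ws" for w
  proof
    assume "\<phi> w"
    show False by (rule bad[of "[w]" "[]" w "[w]"]) (use \<open>\<phi> w\<close> that Tt_iff in \<open>auto simp: C_self\<close>)
  qed
  have pbot': "\<not> \<phi> bot"
  proof
    assume "\<phi> bot"
    show False by (rule bad[of "[bot]" "[]" bot "[]"]) (use \<open>\<phi> bot\<close> Tt_iff in \<open>auto simp: C_def pbot\<close>)
  qed
  have pinf': "\<phi> (inf x y) = (\<phi> x \<and> \<phi> y)" for x y
  proof (intro iffI conjI)
    assume a: "\<phi> (inf x y)"
    show "\<phi> x"
    proof (rule ccontr)
      assume "\<not> \<phi> x"
      show False by (rule bad[of "[inf x y]" "[x]" x "[x]"])
        (use a \<open>\<not> \<phi> x\<close> Tt_iff Nn_iff in \<open>auto simp: C_self le_infI1\<close>)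
    qed
    show "\<phi> y"
    proof (rule ccontr)
      assume "\<not> \<phi> y"
      show False by (rule bad[of "[inf x y]" "[y]" y "[y]"])
        (use a \<open>\<not> \<phi> y\<close> Tt_iff Nn_iff in \<open>auto simp: C_self le_infI1\<close>)
    qed
  next
    assume a: "\<phi> x \<and> \<phi> y"
    show "\<phi> (inf x y)"
    proof (rule ccontr)
      assume "\<not> \<phi> (inf x y)"
      show False by (rule bad[of "[x, y]" "[inf x y]" "inf x y" "[inf x y]"])
        (use a \<open>\<not> \<phi> (inf x y)\<close> Tt_iff Nn_iff in \<open>auto simp: C_self le_infI1 le_infI2\<close>)
    qed
  qed
  have tight: "pi_tight \<pi> \<phi>"
    unfolding pi_tight_def
  proof (intro allI impI)
    fix x ys assume "ys \<noteq> []" and le: "idem_le (\<pi> x) (idem_join (map \<pi> ys))" and px: "\<phi> x"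
    show "\<exists>y\<in>set ys. \<phi> y"
    proof (rule ccontr)
      assume "\<not> (\<exists>y\<in>set ys. \<phi> y)"
      hence "set ys \<subseteq> Nn M" using Nn_iff by auto
      moreover have "C x ys = 0" using le by (simp add: C_def idem_le_def J_def)
      ultimately show False using px Tt_iff by (intro bad[of "[x]" ys x ys]) auto
    qed
  qed
  have "\<phi> \<in> TS" unfolding TS_def sl_character_def
    using pz pbot' pinf' tight by auto
  thus ?thesis using pz pw by blast
qed

lemma pi_idem2: "\<pi> x * (\<pi> x * w) = \<pi> x * w"
  by (simp add: pi_idem flip: mult.assoc)

lemma inj_claim:
  "sc cc (C z ws) + lin L * C z ws \<noteq> 0 \<Longrightarrow> \<exists>\<phi>\<in>TS. hh \<phi> (sc cc (C z ws) + lin L * C z ws) \<noteq> 0"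
proof (induction L arbitrary: z ws cc)
  case Nil
  hence "sc cc (C z ws) \<noteq> 0" by simp
  hence "cc \<noteq> 0" "C z ws \<noteq> 0" by auto
  then obtain \<phi> where "\<phi> \<in> TS" "\<phi> z" "\<forall>w\<in>set ws. \<not> \<phi> w" using exists_char by blast
  hence "hh \<phi> (C z ws) = 1" using hh_C by simp
  hence "hh \<phi> (sc cc (C z ws) + lin [] * C z ws) = cc" using \<open>\<phi> \<in> TS\<close>
    by (simp add: hh_add hh_sc hh_zero)
  thus ?case using \<open>cc \<noteq> 0\<close> \<open>\<phi> \<in> TS\<close> by (metis (no_types, lifting))
next
  case (Cons p L)
  obtain c x where p: "p = (c,x)" by force
  define e where "e = C z ws"
  define e1 where "e1 = C (inf z x) ws"
  define e2 where "e2 = C z (x#ws)"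
  have e12: "e = e1 + e2" using C_split by (simp add: e_def e1_def e2_def)
  have pe: "\<pi> x * e = e1" by (simp add: e_def e1_def pi_C)
  have e2': "e2 = e - \<pi> x * e" using e12 pe by (simp add: algebra_simps)
  have e1e2: "e1 * e2 = 0"
  proof -
    have "e1 * e2 = \<pi> x * e * (e - \<pi> x * e)" using pe e2' by simp
    also have "\<dots> = \<pi> x * (e * e) - \<pi> x * (\<pi> x * (e * e))" by (simp add: algebra_simps AC)
    finally show ?thesis by (simp add: pi_idem2)
  qed
  define T1 where "T1 = sc (cc + c) e1 + lin L * e1"
  define T2 where "T2 = sc cc e2 + lin L * e2"
  have a: "sc c (\<pi> x) * e = sc c e1" using pe scm1 by metis
  have "sc cc e + lin (p#L) * e = sc cc e + sc c e1 + lin L * e" by (simp add: p distrib_right a add.assoc)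
  also have "\<dots> = sc cc (e1 + e2) + sc c e1 + lin L * (e1 + e2)" by (simp add: e12)
  also have "\<dots> = T1 + T2" by (simp add: T1_def T2_def M.scale_right_distrib M.scale_left_distrib
      distrib_left algebra_simps)
  finally have TT: "sc cc e + lin (p#L) * e = T1 + T2" .
  have hT: "hh \<phi> (sc cc e + lin (p#L) * e) = hh \<phi> T1 + hh \<phi> T2" if "\<phi> \<in> TS" for \<phi>
    using that by (simp add: TT hh_add)
  have hT1: "hh \<phi> T1 = (cc + c + hh \<phi> (lin L)) * hh \<phi> e1" if "\<phi> \<in> TS" for \<phi>
    using that by (simp add: T1_def hh_add hh_sc hh_mult algebra_simps)
  have hT2: "hh \<phi> T2 = (cc + hh \<phi> (lin L)) * hh \<phi> e2" if "\<phi> \<in> TS" for \<phi>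
    using that by (simp add: T2_def hh_add hh_sc hh_mult algebra_simps)
  have h12: "hh \<phi> e1 * hh \<phi> e2 = 0" if "\<phi> \<in> TS" for \<phi>
    using that hh_mult[OF that, of e1 e2] by (simp add: e1e2 hh_zero)
  have "T1 \<noteq> 0 \<or> T2 \<noteq> 0" using Cons.prems TT by (auto simp: e_def)
  thus ?case
  proof
    assume "T1 \<noteq> 0"
    then obtain \<phi> where \<phi>: "\<phi> \<in> TS" "hh \<phi> T1 \<noteq> 0" using Cons.IH[where z="inf z x" and ws=ws and cc="cc + c"]
      by (auto simp: T1_def e1_def)
    hence "hh \<phi> e1 \<noteq> 0" using hT1 by auto
    hence "hh \<phi> e2 = 0" using h12[OF \<phi>(1)] by simp
    hence "hh \<phi> T2 = 0" using hT2[OF \<phi>(1)] by simp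
    hence "hh \<phi> (sc cc e + lin (p#L) * e) \<noteq> 0" using \<phi> hT[OF \<phi>(1)] by simp
    thus ?case using \<phi>(1) unfolding e_def by blast
  next
    assume "T2 \<noteq> 0"
    then obtain \<phi> where \<phi>: "\<phi> \<in> TS" "hh \<phi> T2 \<noteq> 0" using Cons.IH[where z=z and ws="x#ws" and cc=cc]
      by (auto simp: T2_def e2_def)
    hence "hh \<phi> e2 \<noteq> 0" using hT2 by auto
    hence "hh \<phi> e1 = 0" using h12[OF \<phi>(1)] by simp
    hence "hh \<phi> T1 = 0" using hT1[OF \<phi>(1)] by simp
    hence "hh \<phi> (sc cc e + lin (p#L) * e) \<noteq> 0" using \<phi> hT[OF \<phi>(1)] by simp
    thus ?case using \<phi>(1) unfolding e_def by blast
  qed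
qed

lemma decomp: "d * J xs \<noteq> 0 \<Longrightarrow> \<exists>z ws. d * C z ws \<noteq> 0"
proof (induction xs arbitrary: d)
  case Nil thus ?case by simp
next
  case (Cons x xs)
  have eq: "d * J (x#xs) = d * \<pi> x + (d - d * \<pi> x) * J xs"
    by (simp add: J_Cons algebra_simps mult.assoc)
  show ?case
  proof (cases "d * \<pi> x = 0")
    case False
    hence "d * C x [] \<noteq> 0" by (simp add: C_Nil)
    thus ?thesis by blast
  next
    case True
    hence "(d - d * \<pi> x) * J xs \<noteq> 0" using Cons.prems eq by simp
    then obtain z ws where "(d - d * \<pi> x) * C z ws \<noteq> 0" using Cons.IH by blast
    moreover have "(d - d * \<pi> x) * C z ws = d * C z (x#ws)"
    proof -
      have h: "C z ws = C z (x#ws) + \<pi> x * C z ws" using C_split[of z ws x] pi_C[of x z ws] by simp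
      have "(d - d * \<pi> x) * C z ws = d * C z ws - d * (\<pi> x * C z ws)"
        by (simp add: algebra_simps mult.assoc)
      also have "\<dots> = d * C z (x#ws)" by (subst h) (simp add: distrib_left)
      finally show ?thesis .
    qed
    ultimately show ?thesis by metis
  qed
qed

lemma lin_J: "\<forall>(c,x)\<in>set L. x \<in> set xs \<Longrightarrow> lin L * J xs = lin L"
  by (induction L) (auto simp: distrib_right scm1[symmetric] J_mem)

lemma injective_hh: "(\<forall>\<phi>\<in>TS. hh \<phi> d = 0) \<Longrightarrow> d = 0"
proof (rule ccontr)
  assume all: "\<forall>\<phi>\<in>TS. hh \<phi> d = 0" and d: "d \<noteq> 0"
  obtain L where L: "d = lin L" using gen_lin by blast
  have "d * J (map snd L) = d" using L lin_J[of L "map snd L"] by force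
  then obtain z ws where "d * C z ws \<noteq> 0" using decomp d by metis
  hence "sc 0 (C z ws) + lin L * C z ws \<noteq> 0" using L by simp
  then obtain \<phi> where "\<phi> \<in> TS" "hh \<phi> (sc 0 (C z ws) + lin L * C z ws) \<noteq> 0" using inj_claim by blast
  thus False using all L by (simp add: hh_add hh_sc hh_mult)
qed

end



lemma closed_dep1:
  assumes "finite S" and dep: "\<And>\<phi> \<psi>. (\<forall>x\<in>S. \<phi> x = \<psi> x) \<Longrightarrow> P \<phi> = P \<psi>"
  shows "closedin pointwise_top {\<phi>. P \<phi>}"
  using closed_dep[of "\<lambda>_::unit. S" "\<lambda>_. P"] assms by simp

context S15 begin

definition AS :: "('a \<Rightarrow> 'k) set" where "AS = {h. alg_hom_K sc h \<and> h \<noteq> (\<lambda>_. 0)}"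

definition FF :: "('a \<Rightarrow> 'k) \<Rightarrow> ('e \<Rightarrow> bool)" where "FF h = (\<lambda>x. h (\<pi> x) = 1)"

lemma topspace_alg [simp]: "topspace (alg_spectrum sc) = AS"
  by (simp add: alg_spectrum_def AS_def)

lemma topspace_tight [simp]: "topspace (tight_spectrum \<pi>) = TS"
  by (simp add: tight_spectrum_def TS_def)

lemma ah_add: "alg_hom_K sc h \<Longrightarrow> h (a + b) = h a + h b" by (simp add: alg_hom_K_def)
lemma ah_mult: "alg_hom_K sc h \<Longrightarrow> h (a * b) = h a * h b" by (simp add: alg_hom_K_def)
lemma ah_sc: "alg_hom_K sc h \<Longrightarrow> h (sc c a) = c * h a" by (simp add: alg_hom_K_def)
lemma ah_zero: "alg_hom_K sc h \<Longrightarrow> h 0 = 0" by (metis ah_add add_0 add_cancel_right_right)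
lemma ah_diff: "alg_hom_K sc h \<Longrightarrow> h (a - b) = h a - h b" by (metis ah_add diff_add_cancel eq_diff_eq)

lemma ah_pi01: "alg_hom_K sc h \<Longrightarrow> h (\<pi> x) = 0 \<or> h (\<pi> x) = 1"
proof -
  assume h: "alg_hom_K sc h"
  have "h (\<pi> x) * h (\<pi> x) = h (\<pi> x)" using ah_mult[OF h, of "\<pi> x" "\<pi> x"] pi_idem by simp
  thus ?thesis by (metis mult_cancel_right2 mult_zero_left)
qed

lemma ah_lin: "alg_hom_K sc h \<Longrightarrow> h (lin L) = sum_list (map (\<lambda>(c,x). c * h (\<pi> x)) L)"
  by (induction L) (auto simp: ah_add ah_sc ah_zero)

lemma ah_J: "alg_hom_K sc h \<Longrightarrow> h (J ws) = (if \<exists>w\<in>set ws. h (\<pi> w) = 1 then 1 else 0)"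
proof (induction ws)
  case Nil thus ?case by (simp add: ah_zero)
next
  case (Cons w ws)
  show ?case using Cons ah_pi01[OF Cons.prems, of w]
    by (auto simp: J_Cons ah_diff ah_add ah_mult)
qed

lemma FF_TS: "h \<in> AS \<Longrightarrow> FF h \<in> TS"
proof -
  assume "h \<in> AS"
  hence h: "alg_hom_K sc h" and nz: "h \<noteq> (\<lambda>_. 0)" by (auto simp: AS_def)
  have nz': "FF h \<noteq> (\<lambda>_. False)"
  proof
    assume "FF h = (\<lambda>_. False)"
    hence "h (\<pi> x) = 0" for x using ah_pi01[OF h, of x] unfolding FF_def by metis
    hence "h (lin L) = 0" for L by (induction L) (auto simp: ah_zero[OF h] ah_add[OF h] ah_sc[OF h])
    hence "h a = 0" for a using gen_lin by metis
    thus False using nz by auto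
  qed
  have bt: "\<not> FF h bot" by (simp add: FF_def pbot ah_zero[OF h])
  have inf: "FF h (inf x y) = (FF h x \<and> FF h y)" for x y
    using ah_pi01[OF h, of x] ah_pi01[OF h, of y] by (auto simp: FF_def pinf ah_mult[OF h])
  have ti: "pi_tight \<pi> (FF h)"
    unfolding pi_tight_def
  proof (intro allI impI)
    fix x ys assume "ys \<noteq> []" and le: "idem_le (\<pi> x) (idem_join (map \<pi> ys))" and px: "FF h x"
    have "\<pi> x * J ys = \<pi> x" using le by (simp add: idem_le_def J_def)
    hence "h (\<pi> x) * h (J ys) = h (\<pi> x)" using ah_mult[OF h] by metis
    hence "h (J ys) = 1" using px by (simp add: FF_def)
    thus "\<exists>y\<in>set ys. FF h y" by (auto simp: ah_J[OF h] FF_def split: if_splits)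
  qed
  show ?thesis using nz' bt inf ti by (simp add: TS_def sl_character_def)
qed

lemma hh_FF: "h \<in> AS \<Longrightarrow> hh (FF h) = h"
proof
  fix a assume hA: "h \<in> AS"
  hence h: "alg_hom_K sc h" by (simp add: AS_def)
  obtain L where L: "a = lin L" using gen_lin by blast
  have "val (FF h) L = sum_list (map (\<lambda>(c,x). c * h (\<pi> x)) L)"
  proof (induction L)
    case (Cons p L) thus ?case using ah_pi01[OF h, of "snd p"] by (cases p) (auto simp: FF_def)
  qed simp
  thus "hh (FF h) a = h a" using L hh_lin[OF FF_TS[OF hA]] ah_lin[OF h] by simp
qed

lemma FF_hh: "\<phi> \<in> TS \<Longrightarrow> FF (hh \<phi>) = \<phi>"
  by (auto simp: FF_def hh_pi)

lemma hh_AS: "\<phi> \<in> TS \<Longrightarrow> hh \<phi> \<in> AS"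
  by (simp add: AS_def hh_alg hh_nonzero)

lemma val_dep: "(\<forall>x\<in>set (map snd L). \<phi> x = \<psi> x) \<Longrightarrow> val \<phi> L = val \<psi> L"
  by (induction L) auto

lemma cont_pointwise:
  "continuous_map X pointwise_top f \<longleftrightarrow> (\<forall>k. continuous_map X (discrete_topology UNIV) (\<lambda>x. f x k))"
  unfolding pointwise_top_def by (rule continuous_map_componentwise_UNIV)

lemma cont_FF: "continuous_map (alg_spectrum sc) (tight_spectrum \<pi>) FF"
  unfolding tight_spectrum_def continuous_map_in_subtopology
proof
  show "continuous_map (alg_spectrum sc) pointwise_top FF"
    unfolding cont_pointwise alg_spectrum_def
  proof
    fix k
    show "continuous_map (subtopology pointwise_top {h. alg_hom_K sc h \<and> h \<noteq> (\<lambda>_. 0)}) (discrete_topology UNIV) (\<lambda>x. FF x k)"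
      by (rule continuous_dep[of "{\<pi> k}"]) (auto simp: FF_def)
  qed
  show "FF \<in> topspace (alg_spectrum sc) \<rightarrow> {\<phi>. sl_character \<phi> \<and> pi_tight \<pi> \<phi>}"
    using FF_TS by (auto simp: TS_def)
qed

lemma cont_hh: "continuous_map (tight_spectrum \<pi>) (alg_spectrum sc) hh"
  unfolding alg_spectrum_def continuous_map_in_subtopology
proof
  show "continuous_map (tight_spectrum \<pi>) pointwise_top hh"
    unfolding cont_pointwise tight_spectrum_def
  proof
    fix a
    obtain L where L: "a = lin L" using gen_lin by blast
    show "continuous_map (subtopology pointwise_top {\<phi>. sl_character \<phi> \<and> pi_tight \<pi> \<phi>}) (discrete_topology UNIV) (\<lambda>x. hh x a)"
    proof (rule continuous_dep[of "set (map snd L)"])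
      fix \<phi> \<psi> assume "\<phi> \<in> {\<phi>. sl_character \<phi> \<and> pi_tight \<pi> \<phi>}" "\<psi> \<in> {\<phi>. sl_character \<phi> \<and> pi_tight \<pi> \<phi>}"
        "\<forall>x\<in>set (map snd L). \<phi> x = \<psi> x"
      thus "hh \<phi> a = hh \<psi> a" using val_dep[of L \<phi> \<psi>] by (simp add: L hh_lin TS_def)
    qed auto
  qed
  show "hh \<in> topspace (tight_spectrum \<pi>) \<rightarrow> {h. alg_hom_K sc h \<and> h \<noteq> (\<lambda>_. 0)}"
    using hh_AS by (auto simp: AS_def)
qed

theorem part1: "alg_spectrum sc homeomorphic_space tight_spectrum \<pi>"
  by (rule homeomorphic_maps_imp_homeomorphic_space[of _ _ FF hh])
    (simp add: homeomorphic_maps_def cont_FF cont_hh hh_FF FF_hh)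

end



context S15 begin

definition Phi :: "'a \<Rightarrow> ('e \<Rightarrow> bool) \<Rightarrow> 'k" where
  "Phi a = (\<lambda>\<phi>. if \<phi> \<in> TS then hh \<phi> a else 0)"

lemma Phi_add: "Phi (a + b) = (\<lambda>x. Phi a x + Phi b x)"
  by (auto simp: Phi_def hh_add)
lemma Phi_mult: "Phi (a * b) = (\<lambda>x. Phi a x * Phi b x)"
  by (auto simp: Phi_def hh_mult)
lemma Phi_sc: "Phi (sc c a) = (\<lambda>x. c * Phi a x)"
  by (auto simp: Phi_def hh_sc)

definition Kx :: "'e \<Rightarrow> ('e \<Rightarrow> bool) set" where "Kx x = {\<phi>\<in>TS. \<phi> x}"

lemma Kx_eq: "Kx x = {\<phi>. \<phi> x} \<inter> {\<phi>. \<not> \<phi> bot} \<inter>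
   {\<phi>. \<forall>p. \<phi> (inf (fst p) (snd p)) = (\<phi> (fst p) \<and> \<phi> (snd p))} \<inter>
   {\<phi>. \<forall>q. snd q \<noteq> [] \<longrightarrow> idem_le (\<pi> (fst q)) (idem_join (map \<pi> (snd q))) \<longrightarrow> \<phi> (fst q) \<longrightarrow> (\<exists>y\<in>set (snd q). \<phi> y)}"
  by (auto simp: Kx_def TS_def sl_character_def pi_tight_def)

lemma closed_Kx: "closedin pointwise_top (Kx x)"
proof -
  have 1: "closedin pointwise_top {\<phi>. \<phi> x}" by (rule closed_dep1[of "{x}"]) auto
  have 2: "closedin pointwise_top {\<phi>. \<not> \<phi> bot}" by (rule closed_dep1[of "{bot}"]) auto
  have 3: "closedin pointwise_top {\<phi>. \<forall>p. \<phi> (inf (fst p) (snd p)) = (\<phi> (fst p) \<and> \<phi> (snd p))}"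
    by (rule closed_dep[of "\<lambda>p. {fst p, snd p, inf (fst p) (snd p)}"]) auto
  have 4: "closedin pointwise_top {\<phi>. \<forall>q. snd q \<noteq> [] \<longrightarrow> idem_le (\<pi> (fst q)) (idem_join (map \<pi> (snd q))) \<longrightarrow> \<phi> (fst q) \<longrightarrow> (\<exists>y\<in>set (snd q). \<phi> y)}"
    by (rule closed_dep[of "\<lambda>q. insert (fst q) (set (snd q))"]) auto
  show ?thesis unfolding Kx_eq by (intro closedin_Int 1 2 3 4)
qed

lemma compact_Kx: "compactin (tight_spectrum \<pi>) (Kx x)"
proof -
  have "compactin pointwise_top (Kx x)" by (rule closedin_compact_space[OF compact_pointwise_bool closed_Kx])
  moreover have "Kx x \<subseteq> TS" by (auto simp: Kx_def)
  ultimately show ?thesis unfolding tight_spectrum_def compactin_subtopology TS_def[symmetric] by blast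
qed

lemma val_nz: "val \<phi> L \<noteq> 0 \<Longrightarrow> \<exists>x\<in>set (map snd L). \<phi> x"
  by (induction L) (auto split: if_splits)

lemma cont_Phi: "continuous_map (tight_spectrum \<pi>) (discrete_topology UNIV) (Phi a)"
proof -
  obtain L where L: "a = lin L" using gen_lin by blast
  show ?thesis unfolding tight_spectrum_def
  proof (rule continuous_dep[of "set (map snd L)"])
    fix \<phi> \<psi> assume "\<phi> \<in> {\<phi>. sl_character \<phi> \<and> pi_tight \<pi> \<phi>}" "\<psi> \<in> {\<phi>. sl_character \<phi> \<and> pi_tight \<pi> \<phi>}"
      "\<forall>x\<in>set (map snd L). \<phi> x = \<psi> x"
    thus "Phi a \<phi> = Phi a \<psi>" using val_dep[of L \<phi> \<psi>] by (simp add: Phi_def L hh_lin TS_def)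
  qed auto
qed

lemma Phi_Cc: "Phi a \<in> Cc (tight_spectrum \<pi>)"
proof -
  let ?X = "tight_spectrum \<pi>"
  obtain L where L: "a = lin L" using gen_lin by blast
  have out: "\<forall>x. x \<notin> topspace ?X \<longrightarrow> Phi a x = 0" by (simp add: Phi_def)
  have lc: "locally_constant ?X (Phi a)"
    unfolding locally_constant_def
  proof
    fix \<phi> assume \<phi>: "\<phi> \<in> topspace ?X"
    show "\<exists>U. openin ?X U \<and> \<phi> \<in> U \<and> (\<forall>y\<in>U. Phi a y = Phi a \<phi>)"
    proof (intro exI conjI)
      show "openin ?X (TS \<inter> cyl \<phi> (set (map snd L)))"
        unfolding tight_spectrum_def TS_def[symmetric]
        by (rule openin_subtopology_Int2, rule openin_cyl) simp
      show "\<phi> \<in> TS \<inter> cyl \<phi> (set (map snd L))" using \<phi> by simp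
      show "\<forall>y\<in>TS \<inter> cyl \<phi> (set (map snd L)). Phi a y = Phi a \<phi>"
      proof
        fix y assume y: "y \<in> TS \<inter> cyl \<phi> (set (map snd L))"
        have "val y L = val \<phi> L" by (rule val_dep) (use y in \<open>simp add: cyl_def\<close>)
        thus "Phi a y = Phi a \<phi>" using y \<phi> by (simp add: Phi_def L hh_lin)
      qed
    qed
  qed
  define supp where "supp = {x \<in> topspace ?X. Phi a x \<noteq> 0}"
  have cl: "closedin ?X supp"
    using closedin_continuous_map_preimage[OF cont_Phi[of a], of "UNIV - {0}"]
    by (simp add: supp_def)
  have sub: "supp \<subseteq> \<Union> (Kx ` set (map snd L))"
  proof
    fix \<phi> assume "\<phi> \<in> supp"
    hence "\<phi> \<in> TS" "val \<phi> L \<noteq> 0" by (auto simp: supp_def Phi_def L hh_lin)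
    thus "\<phi> \<in> \<Union> (Kx ` set (map snd L))" using val_nz by (auto simp: Kx_def)
  qed
  have "compactin ?X (\<Union> (Kx ` set (map snd L)))"
    by (rule compactin_Union) (auto simp: compact_Kx)
  hence "compactin ?X supp" using closed_compactin sub cl by blast
  hence "compactin ?X (?X closure_of supp)" by (simp add: closure_of_closedin[OF cl])
  thus ?thesis using out lc unfolding Cc_def supp_def by blast
qed

lemma Phi_inj: "inj Phi"
  unfolding inj_def
proof (intro allI impI)
  fix a b assume eq: "Phi a = Phi b"
  have "hh \<phi> (a - b) = 0" if "\<phi> \<in> TS" for \<phi>
    using fun_cong[OF eq, of \<phi>] that by (simp add: Phi_def hh_diff)
  hence "\<forall>\<phi>\<in>TS. hh \<phi> (a - b) = 0" by blast
  thus "a = b" using injective_hh[of "a - b"] by simp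
qed

lemma rep:
  "\<forall>F. (\<forall>\<psi>1 \<psi>2. (\<forall>x\<in>set xs. \<psi>1 x = \<psi>2 x) \<longrightarrow> F \<psi>1 = F \<psi>2) \<longrightarrow>
      (\<forall>\<psi>. (\<forall>x\<in>set xs. \<not> \<psi> x) \<longrightarrow> F \<psi> = 0) \<longrightarrow> (\<exists>a. \<forall>\<psi>\<in>TS. hh \<psi> a = F \<psi>)"
proof (induction xs)
  case Nil
  show ?case
  proof (intro allI impI)
    fix F :: "('e \<Rightarrow> bool) \<Rightarrow> 'k" assume "\<forall>\<psi>. (\<forall>x\<in>set []. \<not> \<psi> x) \<longrightarrow> F \<psi> = 0"
    hence "F \<psi> = 0" for \<psi> by simp
    thus "\<exists>a. \<forall>\<psi>\<in>TS. hh \<psi> a = F \<psi>" using hh_zero by auto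
  qed
next
  case (Cons x xs)
  show ?case
  proof (intro allI impI)
    fix F :: "('e \<Rightarrow> bool) \<Rightarrow> 'k"
    assume dep: "\<forall>\<psi>1 \<psi>2. (\<forall>x\<in>set (x#xs). \<psi>1 x = \<psi>2 x) \<longrightarrow> F \<psi>1 = F \<psi>2"
      and van: "\<forall>\<psi>. (\<forall>x\<in>set (x#xs). \<not> \<psi> x) \<longrightarrow> F \<psi> = 0"
    define cst where "cst = F ((\<lambda>_. False)(x := True))"
    define F1 where "F1 \<psi> = F (\<psi>(x := True)) - cst" for \<psi>
    define F2 where "F2 \<psi> = F (\<psi>(x := False))" for \<psi>
    have h1: "\<forall>\<psi>1 \<psi>2. (\<forall>x\<in>set xs. \<psi>1 x = \<psi>2 x) \<longrightarrow> F1 \<psi>1 = F1 \<psi>2"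
    proof (intro allI impI)
      show "F1 \<psi>1 = F1 \<psi>2" if "\<forall>x\<in>set xs. \<psi>1 x = \<psi>2 x" for \<psi>1 \<psi>2
      proof -
        have "F (\<psi>1(x := True)) = F (\<psi>2(x := True))" by (rule dep[rule_format]) (use that in auto)
        thus ?thesis by (simp add: F1_def)
      qed
    qed
    have h2: "\<forall>\<psi>. (\<forall>x\<in>set xs. \<not> \<psi> x) \<longrightarrow> F1 \<psi> = 0"
    proof (intro allI impI)
      show "F1 \<psi> = 0" if "\<forall>x\<in>set xs. \<not> \<psi> x" for \<psi>
      proof -
        have "F (\<psi>(x := True)) = F ((\<lambda>_. False)(x := True))" by (rule dep[rule_format]) (use that in auto)
        thus ?thesis by (simp add: F1_def cst_def)
      qed
    qed
    have "\<exists>a. \<forall>\<psi>\<in>TS. hh \<psi> a = F1 \<psi>" using spec[OF Cons.IH, of F1] h1 h2 by blast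
    then obtain b where b: "\<forall>\<psi>\<in>TS. hh \<psi> b = F1 \<psi>" by blast
    have g1: "\<forall>\<psi>1 \<psi>2. (\<forall>x\<in>set xs. \<psi>1 x = \<psi>2 x) \<longrightarrow> F2 \<psi>1 = F2 \<psi>2"
    proof (intro allI impI)
      show "F2 \<psi>1 = F2 \<psi>2" if "\<forall>x\<in>set xs. \<psi>1 x = \<psi>2 x" for \<psi>1 \<psi>2
        unfolding F2_def by (rule dep[rule_format]) (use that in auto)
    qed
    have g2: "\<forall>\<psi>. (\<forall>x\<in>set xs. \<not> \<psi> x) \<longrightarrow> F2 \<psi> = 0"
    proof (intro allI impI)
      show "F2 \<psi> = 0" if "\<forall>x\<in>set xs. \<not> \<psi> x" for \<psi>
        unfolding F2_def by (rule van[rule_format]) (use that in auto)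
    qed
    have "\<exists>a. \<forall>\<psi>\<in>TS. hh \<psi> a = F2 \<psi>" using spec[OF Cons.IH, of F2] g1 g2 by blast
    then obtain a2 where a2: "\<forall>\<psi>\<in>TS. hh \<psi> a2 = F2 \<psi>" by blast
    show "\<exists>a. \<forall>\<psi>\<in>TS. hh \<psi> a = F \<psi>"
    proof (intro exI ballI)
      fix \<psi> assume \<psi>: "\<psi> \<in> TS"
      have "hh \<psi> (\<pi> x * b + sc cst (\<pi> x) + (a2 - \<pi> x * a2)) =
          (if \<psi> x then 1 else 0) * F1 \<psi> + cst * (if \<psi> x then 1 else 0) + (F2 \<psi> - (if \<psi> x then 1 else 0) * F2 \<psi>)"
        using \<psi> b a2 by (simp add: hh_add hh_mult hh_sc hh_diff hh_pi)
      also have "\<dots> = F \<psi>"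
      proof (cases "\<psi> x")
        case True
        hence "\<psi>(x := True) = \<psi>" by (simp add: fun_upd_idem_iff)
        thus ?thesis using True by (simp add: F1_def)
      next
        case False
        hence "\<psi>(x := False) = \<psi>" by (simp add: fun_upd_idem_iff)
        thus ?thesis using False by (simp add: F2_def)
      qed
      finally show "hh \<psi> (\<pi> x * b + sc cst (\<pi> x) + (a2 - \<pi> x * a2)) = F \<psi>" .
    qed
  qed
qed

lemma Phi_surj:
  assumes f: "f \<in> Cc (tight_spectrum \<pi>)"
  shows "\<exists>a. Phi a = f"
proof -
  let ?X = "tight_spectrum \<pi>"
  define supp where "supp = {x \<in> topspace ?X. f x \<noteq> 0}"
  define K where "K = ?X closure_of supp"
  have f0: "\<And>\<phi>. \<phi> \<notin> TS \<Longrightarrow> f \<phi> = 0" and lc: "locally_constant ?X f" and cpt: "compactin ?X K"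
    using f by (auto simp: Cc_def K_def supp_def)
  have suppK: "supp \<subseteq> K" unfolding K_def by (rule closure_of_subset) (auto simp: supp_def)
  have KTS: "K \<subseteq> TS" using cpt compactin_subset_topspace by fastforce
  have "\<forall>\<phi>\<in>TS. \<exists>S. finite S \<and> (\<exists>z\<in>S. \<phi> z) \<and> (\<forall>\<psi>\<in>TS. (\<forall>x\<in>S. \<psi> x = \<phi> x) \<longrightarrow> f \<psi> = f \<phi>)"
  proof
    fix \<phi> assume \<phi>: "\<phi> \<in> TS"
    then obtain U where U: "openin ?X U" "\<phi> \<in> U" "\<forall>y\<in>U. f y = f \<phi>"
      using lc unfolding locally_constant_def by auto
    obtain V where V: "openin pointwise_top V" "U = TS \<inter> V"
      using U(1) unfolding tight_spectrum_def openin_subtopology TS_def by blast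
    obtain S0 where S0: "finite S0" "cyl \<phi> S0 \<subseteq> V" using open_has_cyl[OF V(1)] U(2) V(2) by blast
    obtain z where z: "\<phi> z" using \<phi> unfolding TS_def sl_character_def by fastforce
    show "\<exists>S. finite S \<and> (\<exists>z\<in>S. \<phi> z) \<and> (\<forall>\<psi>\<in>TS. (\<forall>x\<in>S. \<psi> x = \<phi> x) \<longrightarrow> f \<psi> = f \<phi>)"
    proof (intro exI conjI ballI impI)
      show "finite (insert z S0)" using S0 by simp
      show "\<exists>z\<in>insert z S0. \<phi> z" using z by blast
      fix \<psi> assume "\<psi> \<in> TS" "\<forall>x\<in>insert z S0. \<psi> x = \<phi> x"
      hence "\<psi> \<in> U" using S0(2) V(2) by (auto simp: cyl_def)
      thus "f \<psi> = f \<phi>" using U(3) by blast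
    qed
  qed
  then obtain Sel where Sel: "\<forall>\<phi>\<in>TS. finite (Sel \<phi>) \<and> (\<exists>z\<in>Sel \<phi>. \<phi> z) \<and>
      (\<forall>\<psi>\<in>TS. (\<forall>x\<in>Sel \<phi>. \<psi> x = \<phi> x) \<longrightarrow> f \<psi> = f \<phi>)"
    by metis
  define B where "B \<phi> = TS \<inter> cyl \<phi> (Sel \<phi>)" for \<phi>
  have Bopen: "openin ?X (B \<phi>)" if "\<phi> \<in> TS" for \<phi>
    unfolding B_def tight_spectrum_def TS_def[symmetric]
    by (rule openin_subtopology_Int2, rule openin_cyl) (use Sel that in blast)
  have "K \<subseteq> \<Union> (B ` K)" using KTS by (auto simp: B_def)
  moreover have "\<forall>B'\<in>B ` K. openin ?X B'" using Bopen KTS by blast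
  ultimately have "\<exists>F. finite F \<and> F \<subseteq> B ` K \<and> K \<subseteq> \<Union> F"
    using cpt unfolding compactin_def by blast
  then obtain Fs where Fs: "finite Fs" "Fs \<subseteq> B ` K" "K \<subseteq> \<Union> Fs" by blast
  then obtain Ps where Ps: "finite Ps" "Ps \<subseteq> K" "Fs = B ` Ps"
    by (meson finite_subset_image)
  define St where "St = \<Union> (Sel ` Ps)"
  have Stfin: "finite St" using Ps Sel KTS unfolding St_def by blast
  have inK: "\<exists>\<phi>\<in>Ps. \<psi> \<in> B \<phi>" if "\<psi> \<in> K" for \<psi> using Fs Ps that by blast
  have D1: "f \<psi> = f \<psi>'" if A: "\<psi> \<in> K" "\<psi>' \<in> TS" "\<forall>x\<in>St. \<psi> x = \<psi>' x" for \<psi> \<psi>'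
  proof -
    obtain \<phi> where \<phi>: "\<phi> \<in> Ps" "\<psi> \<in> B \<phi>" using inK A(1) by blast
    have \<phi>TS: "\<phi> \<in> TS" using \<phi>(1) Ps KTS by blast
    have agree: "\<forall>x\<in>Sel \<phi>. \<psi> x = \<phi> x" using \<phi>(2) by (auto simp: B_def cyl_def)
    have "\<forall>x\<in>Sel \<phi>. \<psi>' x = \<phi> x" using agree A(3) \<phi>(1) unfolding St_def by auto
    hence "f \<psi>' = f \<phi>" using Sel \<phi>TS A(2) by blast
    moreover have "\<psi> \<in> TS" using \<phi>(2) by (simp add: B_def)
    hence "f \<psi> = f \<phi>" using Sel \<phi>TS agree by blast
    ultimately show ?thesis by simp
  qed
  have D: "f \<psi> = f \<psi>'" if "\<psi> \<in> TS" "\<psi>' \<in> TS" "\<forall>x\<in>St. \<psi> x = \<psi>' x" for \<psi> \<psi>'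
  proof (cases "\<psi> \<in> K \<or> \<psi>' \<in> K")
    case True thus ?thesis using D1 that by (metis)
  next
    case False
    hence "\<psi> \<notin> supp" "\<psi>' \<notin> supp" using suppK by auto
    thus ?thesis using that by (auto simp: supp_def)
  qed
  have Z: "f \<psi> = 0" if "\<psi> \<in> TS" "\<forall>x\<in>St. \<not> \<psi> x" for \<psi>
  proof (cases "\<psi> \<in> K")
    case True
    then obtain \<phi> where \<phi>: "\<phi> \<in> Ps" "\<psi> \<in> B \<phi>" using inK by blast
    have \<phi>TS: "\<phi> \<in> TS" using \<phi>(1) Ps KTS by blast
    then obtain z where "z \<in> Sel \<phi>" "\<phi> z" using Sel by blast
    moreover have "\<psi> z = \<phi> z" using \<phi>(2) \<open>z \<in> Sel \<phi>\<close> by (auto simp: B_def cyl_def)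
    moreover have "z \<in> St" using \<phi>(1) \<open>z \<in> Sel \<phi>\<close> by (auto simp: St_def)
    ultimately show ?thesis using that by auto
  next
    case False
    hence "\<psi> \<notin> supp" using suppK by auto
    thus ?thesis using that by (auto simp: supp_def)
  qed
  obtain xs where xs: "set xs = St" using Stfin finite_list by blast
  define Q where "Q \<psi> = (\<lambda>\<psi>'. \<psi>' \<in> TS \<and> (\<forall>x\<in>St. \<psi>' x = \<psi> x))" for \<psi>
  define F where "F \<psi> = (if \<exists>\<psi>'. Q \<psi> \<psi>' then f (SOME \<psi>'. Q \<psi> \<psi>') else 0)" for \<psi>
  have Fdep: "F \<psi>1 = F \<psi>2" if "\<forall>x\<in>set xs. \<psi>1 x = \<psi>2 x" for \<psi>1 \<psi>2
  proof -
    have "Q \<psi>1 = Q \<psi>2" using that xs by (auto simp: Q_def fun_eq_iff)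
    thus ?thesis by (simp add: F_def)
  qed
  have Fvan: "F \<psi> = 0" if "\<forall>x\<in>set xs. \<not> \<psi> x" for \<psi>
  proof (cases "\<exists>\<psi>'. Q \<psi> \<psi>'")
    case True
    define p where "p = (SOME \<psi>'. Q \<psi> \<psi>')"
    have "Q \<psi> p" using someI_ex[OF True] by (simp add: p_def)
    hence "p \<in> TS" "\<forall>x\<in>St. p x = \<psi> x" by (auto simp: Q_def)
    moreover have "\<forall>x\<in>St. \<not> \<psi> x" using that xs by simp
    ultimately have "f p = 0" using Z[of p] by simp
    thus ?thesis using True by (simp add: F_def p_def)
  qed (simp add: F_def)
  have FTS: "F \<psi> = f \<psi>" if "\<psi> \<in> TS" for \<psi>
  proof -
    have ex: "\<exists>\<psi>'. Q \<psi> \<psi>'" using that by (auto simp: Q_def)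
    define p where "p = (SOME \<psi>'. Q \<psi> \<psi>')"
    have "Q \<psi> p" using someI_ex[OF ex] by (simp add: p_def)
    hence "p \<in> TS" "\<forall>x\<in>St. p x = \<psi> x" by (auto simp: Q_def)
    hence "f p = f \<psi>" using D[of p \<psi>] that by blast
    thus ?thesis using ex by (simp add: F_def p_def)
  qed
  obtain a where a: "\<forall>\<psi>\<in>TS. hh \<psi> a = F \<psi>" using rep[of xs] Fdep Fvan by blast
  have "Phi a = f"
  proof
    fix \<psi> show "Phi a \<psi> = f \<psi>" using a FTS f0 by (cases "\<psi> \<in> TS") (auto simp: Phi_def)
  qed
  thus ?thesis by blast
qed

theorem part2: "\<exists>\<Phi> :: 'a \<Rightarrow> ('e \<Rightarrow> bool) \<Rightarrow> 'k.
        bij_betw \<Phi> UNIV (Cc (tight_spectrum \<pi>)) \<and>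
        (\<forall>a b. \<Phi> (a + b) = (\<lambda>x. \<Phi> a x + \<Phi> b x)) \<and>
        (\<forall>a b. \<Phi> (a * b) = (\<lambda>x. \<Phi> a x * \<Phi> b x)) \<and>
        (\<forall>c a. \<Phi> (sc c a) = (\<lambda>x. c * \<Phi> a x))"
proof (intro exI conjI allI)
  show "bij_betw Phi UNIV (Cc (tight_spectrum \<pi>))"
    unfolding bij_betw_def using Phi_inj Phi_Cc Phi_surj by blast
qed (simp_all add: Phi_add Phi_mult Phi_sc)

end

theorem proposition15p14:
  fixes sc :: "'k::field \<Rightarrow> 'a::ring \<Rightarrow> 'a"
    and \<pi> :: "'e::{semilattice_inf,order_bot} \<Rightarrow> 'a"
  assumes "K_algebra sc"
    and "\<pi> bot = 0"
    and "\<forall>x y. \<pi> (inf x y) = \<pi> x * \<pi> y"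
    and "alg_gen sc (range \<pi>) = UNIV"
  shows "alg_spectrum sc homeomorphic_space tight_spectrum \<pi> \<and>
    (\<exists>\<Phi> :: 'a \<Rightarrow> ('e \<Rightarrow> bool) \<Rightarrow> 'k.
        bij_betw \<Phi> UNIV (Cc (tight_spectrum \<pi>)) \<and>
        (\<forall>a b. \<Phi> (a + b) = (\<lambda>x. \<Phi> a x + \<Phi> b x)) \<and>
        (\<forall>a b. \<Phi> (a * b) = (\<lambda>x. \<Phi> a x * \<Phi> b x)) \<and>
        (\<forall>c a. \<Phi> (sc c a) = (\<lambda>x. c * \<Phi> a x)))"
proof -
  interpret S15 sc \<pi> by unfold_locales (use assms in auto)
  show ?thesis using part1 part2 by blast
qed

end
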